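(* Let $\tilde{\mathfrak g}$ be a real solvable Lie algebra with a metric $\langle,\rangle$ satisfying $\widetilde{\operatorname{Ric}}=\lambda\,\mathrm{id}$ with $\lambda\neq0$, and let $\tilde{\mathfrak g}=\mathfrak g\oplus^\perp\mathfrak a$ be a pseudo-Iwasawa decomposition. Then, up to isometric isomorphism, $\tilde{\mathfrak g}$ is a pseudo-Iwasawa extension of $\mathfrak g$ (with the induced metric $\langle,\rangle_{\mathfrak g}$): that is, the induced metric on $\mathfrak g$ satisfies $\operatorname{Ric}=\lambda\,\mathrm{id}+D$ for some $D\in\operatorname{Der}\mathfrak g$, and there is a Lie subalgebra $\mathfrak a'\subset\operatorname{Der}\mathfrak g$ of $\langle,\rangle_{\mathfrak g}$-self-adjoint derivations containing $D$, on which $\langle X,Y\rangle_{\mathrm{Tr}}=\operatorname{Tr}(XY)$ is nondegenerate, such that $\tilde{\mathfrak g}$ with its metric is isometrically isomorphic to the semidirect product $\mathfrak g\rtimes\mathfrak a'$ (with $[X,v]=X(v)$) endowed with the metric $\langle,\rangle_{\mathfrak g}-\frac1\lambda\langle,\rangle_{\mathrm{Tr}}$, $\mathfrak g\perp\mathfrak a'$.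
   Context: A metric on a Lie algebra is a nondegenerate symmetric bilinear form, possibly indefinite; Ricci operators are those of the corresponding left-invariant pseudo-Riemannian metrics on simply connected Lie groups. A pseudo-Iwasawa decomposition of a metric Lie algebra $\tilde{\mathfrak g}$ is an orthogonal direct sum of vector spaces $\tilde{\mathfrak g}=\mathfrak g\oplus^\perp\mathfrak a$ with $\mathfrak g$ a nilpotent ideal, $\mathfrak a$ an abelian subalgebra, and $\operatorname{ad}X$ self-adjoint for every $X\in\mathfrak a$. *)

theory Defs
  imports "HOL-Analysis.Analysis"
begin

text \<open>Finite-dimensional real Lie algebras are modelled as a linear subspace V of a
Euclidean space type 'v (only its real vector space structure is used; finite
dimension is automatic), with a bracket br and a metric m (nondegenerate symmetric
bilinear form, possibly indefinite). Values of br, m and of endomorphisms outside V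
are irrelevant.\<close>

definition bilinear_on :: "'v::real_vector set \<Rightarrow> ('v \<Rightarrow> 'v \<Rightarrow> 'w::real_vector) \<Rightarrow> bool" where
  "bilinear_on V f \<longleftrightarrow>
     (\<forall>x\<in>V. \<forall>y\<in>V. \<forall>z\<in>V. \<forall>c::real.
        f (x + y) z = f x z + f y z \<and> f z (x + y) = f z x + f z y \<and>
        f (c *\<^sub>R x) z = c *\<^sub>R f x z \<and> f z (c *\<^sub>R x) = c *\<^sub>R f z x)"

definition linear_on :: "'v::real_vector set \<Rightarrow> ('v \<Rightarrow> 'v) \<Rightarrow> bool" where
  "linear_on V f \<longleftrightarrow> (\<forall>x\<in>V. f x \<in> V) \<and>
     (\<forall>x\<in>V. \<forall>y\<in>V. \<forall>c::real. f (x + y) = f x + f y \<and> f (c *\<^sub>R x) = c *\<^sub>R f x)"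

definition lie_algebra :: "'v::real_vector set \<Rightarrow> ('v \<Rightarrow> 'v \<Rightarrow> 'v) \<Rightarrow> bool" where
  "lie_algebra V br \<longleftrightarrow> subspace V \<and> (\<forall>x\<in>V. \<forall>y\<in>V. br x y \<in> V) \<and> bilinear_on V br \<and>
     (\<forall>x\<in>V. br x x = 0) \<and>
     (\<forall>x\<in>V. \<forall>y\<in>V. \<forall>z\<in>V. br x (br y z) + br y (br z x) + br z (br x y) = 0)"

definition metric_on :: "'v::real_vector set \<Rightarrow> ('v \<Rightarrow> 'v \<Rightarrow> real) \<Rightarrow> bool" where
  "metric_on V m \<longleftrightarrow> bilinear_on V m \<and> (\<forall>x\<in>V. \<forall>y\<in>V. m x y = m y x) \<and>
     (\<forall>x\<in>V. (\<forall>y\<in>V. m x y = 0) \<longrightarrow> x = 0)"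

definition derived :: "('v::real_vector \<Rightarrow> 'v \<Rightarrow> 'v) \<Rightarrow> 'v set \<Rightarrow> 'v set" where
  "derived br W = span {br x y | x y. x \<in> W \<and> y \<in> W}"

definition solvable :: "'v::real_vector set \<Rightarrow> ('v \<Rightarrow> 'v \<Rightarrow> 'v) \<Rightarrow> bool" where
  "solvable V br \<longleftrightarrow> (\<exists>k. (derived br ^^ k) V = {0})"

definition lcs_step :: "('v::real_vector \<Rightarrow> 'v \<Rightarrow> 'v) \<Rightarrow> 'v set \<Rightarrow> 'v set \<Rightarrow> 'v set" where
  "lcs_step br V W = span {br x y | x y. x \<in> V \<and> y \<in> W}"

definition nilpotent :: "'v::real_vector set \<Rightarrow> ('v \<Rightarrow> 'v \<Rightarrow> 'v) \<Rightarrow> bool" where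
  "nilpotent V br \<longleftrightarrow> (\<exists>k. (lcs_step br V ^^ k) V = {0})"

definition ideal :: "'v::real_vector set \<Rightarrow> ('v \<Rightarrow> 'v \<Rightarrow> 'v) \<Rightarrow> 'v set \<Rightarrow> bool" where
  "ideal V br I \<longleftrightarrow> subspace I \<and> I \<subseteq> V \<and> (\<forall>x\<in>V. \<forall>y\<in>I. br x y \<in> I)"

definition abelian_subalgebra :: "'v::real_vector set \<Rightarrow> ('v \<Rightarrow> 'v \<Rightarrow> 'v) \<Rightarrow> 'v set \<Rightarrow> bool" where
  "abelian_subalgebra V br A \<longleftrightarrow> subspace A \<and> A \<subseteq> V \<and> (\<forall>x\<in>A. \<forall>y\<in>A. br x y = 0)"

definition pseudo_iwasawa :: "'v::real_vector set \<Rightarrow> ('v \<Rightarrow> 'v \<Rightarrow> 'v) \<Rightarrow> ('v \<Rightarrow> 'v \<Rightarrow> real)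
    \<Rightarrow> 'v set \<Rightarrow> 'v set \<Rightarrow> bool" where
  "pseudo_iwasawa V br m g a \<longleftrightarrow>
     ideal V br g \<and> nilpotent g br \<and> abelian_subalgebra V br a \<and>
     g \<inter> a = {0} \<and> (\<forall>v\<in>V. \<exists>x\<in>g. \<exists>y\<in>a. v = x + y) \<and>
     (\<forall>x\<in>g. \<forall>y\<in>a. m x y = 0) \<and>
     (\<forall>X\<in>a. \<forall>u\<in>V. \<forall>w\<in>V. m (br X u) w = m u (br X w))"

text \<open>Trace of an endomorphism f of a finite-dimensional subspace V, computed in some
basis of V (the value does not depend on the basis).\<close>

definition trace_on :: "'v::euclidean_space set \<Rightarrow> ('v \<Rightarrow> 'v) \<Rightarrow> real" where
  "trace_on V f = (let B = (SOME B. B \<subseteq> V \<and> independent B \<and> span B = V)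
                   in \<Sum>b\<in>B. representation B (f b) b)"

text \<open>Levi-Civita connection of the left-invariant metric (Koszul formula),
curvature R(X,Y) = [nabla_X, nabla_Y] - nabla_[X,Y], Ricci tensor
ric(Y,Z) = tr(X \<mapsto> R(X,Y)Z), and Ricci operator (m(Ric Y, Z) = ric(Y,Z)).\<close>

definition lc_nabla :: "'v::real_vector set \<Rightarrow> ('v \<Rightarrow> 'v \<Rightarrow> 'v) \<Rightarrow> ('v \<Rightarrow> 'v \<Rightarrow> real) \<Rightarrow> 'v \<Rightarrow> 'v \<Rightarrow> 'v" where
  "lc_nabla V br m x y = (THE w. w \<in> V \<and>
     (\<forall>z\<in>V. 2 * m w z = m (br x y) z - m (br y z) x + m (br z x) y))"

definition curvature :: "'v::real_vector set \<Rightarrow> ('v \<Rightarrow> 'v \<Rightarrow> 'v) \<Rightarrow> ('v \<Rightarrow> 'v \<Rightarrow> real) \<Rightarrow> 'v \<Rightarrow> 'v \<Rightarrow> 'v \<Rightarrow> 'v" where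
  "curvature V br m x y z =
     lc_nabla V br m x (lc_nabla V br m y z) - lc_nabla V br m y (lc_nabla V br m x z)
     - lc_nabla V br m (br x y) z"

definition ricci_tensor :: "'v::euclidean_space set \<Rightarrow> ('v \<Rightarrow> 'v \<Rightarrow> 'v) \<Rightarrow> ('v \<Rightarrow> 'v \<Rightarrow> real) \<Rightarrow> 'v \<Rightarrow> 'v \<Rightarrow> real" where
  "ricci_tensor V br m y z = trace_on V (\<lambda>x. curvature V br m x y z)"

definition ricci_op :: "'v::euclidean_space set \<Rightarrow> ('v \<Rightarrow> 'v \<Rightarrow> 'v) \<Rightarrow> ('v \<Rightarrow> 'v \<Rightarrow> real) \<Rightarrow> 'v \<Rightarrow> 'v" where
  "ricci_op V br m y = (THE w. w \<in> V \<and> (\<forall>z\<in>V. m w z = ricci_tensor V br m y z))"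

text \<open>Derivations of (V, br), represented as maps vanishing outside V (so that each
derivation has a unique representative and pointwise operations are the vector space
operations of Der V).\<close>

definition derivations :: "'v::real_vector set \<Rightarrow> ('v \<Rightarrow> 'v \<Rightarrow> 'v) \<Rightarrow> ('v \<Rightarrow> 'v) set" where
  "derivations V br = {D. linear_on V D \<and> (\<forall>x. x \<notin> V \<longrightarrow> D x = 0) \<and>
      (\<forall>x\<in>V. \<forall>y\<in>V. D (br x y) = br (D x) y + br x (D y))}"

definition self_adjoint_on :: "'v::real_vector set \<Rightarrow> ('v \<Rightarrow> 'v \<Rightarrow> real) \<Rightarrow> ('v \<Rightarrow> 'v) \<Rightarrow> bool" where
  "self_adjoint_on V m D \<longleftrightarrow> (\<forall>x\<in>V. \<forall>y\<in>V. m (D x) y = m x (D y))"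

definition der_subalgebra :: "'v::real_vector set \<Rightarrow> ('v \<Rightarrow> 'v \<Rightarrow> 'v) \<Rightarrow> ('v \<Rightarrow> 'v) set \<Rightarrow> bool" where
  "der_subalgebra V br A \<longleftrightarrow> A \<subseteq> derivations V br \<and> (\<lambda>_. 0) \<in> A \<and>
     (\<forall>X\<in>A. \<forall>Y\<in>A. (\<lambda>v. X v + Y v) \<in> A) \<and>
     (\<forall>X\<in>A. \<forall>c::real. (\<lambda>v. c *\<^sub>R X v) \<in> A) \<and>
     (\<forall>X\<in>A. \<forall>Y\<in>A. (\<lambda>v. X (Y v) - Y (X v)) \<in> A)"

definition trace_form :: "'v::euclidean_space set \<Rightarrow> ('v \<Rightarrow> 'v) \<Rightarrow> ('v \<Rightarrow> 'v) \<Rightarrow> real" where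
  "trace_form V X Y = trace_on V (\<lambda>v. X (Y v))"

definition sd_bracket :: "('v::real_vector \<Rightarrow> 'v \<Rightarrow> 'v) \<Rightarrow> 'v \<times> ('v \<Rightarrow> 'v) \<Rightarrow> 'v \<times> ('v \<Rightarrow> 'v) \<Rightarrow> 'v \<times> ('v \<Rightarrow> 'v)" where
  "sd_bracket br p q = (case p of (v, X) \<Rightarrow> case q of (w, Y) \<Rightarrow>
      (br v w + X w - Y v, (\<lambda>u. X (Y u) - Y (X u))))"

definition sd_metric :: "'v::euclidean_space set \<Rightarrow> ('v \<Rightarrow> 'v \<Rightarrow> real) \<Rightarrow> real
    \<Rightarrow> 'v \<times> ('v \<Rightarrow> 'v) \<Rightarrow> 'v \<times> ('v \<Rightarrow> 'v) \<Rightarrow> real" where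
  "sd_metric g m lam p q = (case p of (v, X) \<Rightarrow> case q of (w, Y) \<Rightarrow>
      m v w - (1 / lam) * trace_form g X Y)"

definition sd_isometric_iso :: "'v::euclidean_space set \<Rightarrow> ('v \<Rightarrow> 'v \<Rightarrow> 'v) \<Rightarrow> ('v \<Rightarrow> 'v \<Rightarrow> real)
    \<Rightarrow> 'v set \<Rightarrow> ('v \<Rightarrow> 'v) set \<Rightarrow> real \<Rightarrow> ('v \<times> ('v \<Rightarrow> 'v) \<Rightarrow> 'v) \<Rightarrow> bool" where
  "sd_isometric_iso V br m g A lam \<Phi> \<longleftrightarrow>
     bij_betw \<Phi> (g \<times> A) V \<and>
     (\<forall>v\<in>g. \<forall>w\<in>g. \<forall>X\<in>A. \<forall>Y\<in>A. \<forall>c::real.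
        \<Phi> (v + w, \<lambda>u. X u + Y u) = \<Phi> (v, X) + \<Phi> (w, Y) \<and>
        \<Phi> (c *\<^sub>R v, \<lambda>u. c *\<^sub>R X u) = c *\<^sub>R \<Phi> (v, X) \<and>
        \<Phi> (sd_bracket br (v, X) (w, Y)) = br (\<Phi> (v, X)) (\<Phi> (w, Y)) \<and>
        m (\<Phi> (v, X)) (\<Phi> (w, Y)) = sd_metric g m lam (v, X) (w, Y))"

end

theory Submission
  imports Defs
begin


locale base =
  fixes br :: "'v::euclidean_space \<Rightarrow> 'v \<Rightarrow> 'v" and m :: "'v \<Rightarrow> 'v \<Rightarrow> real"
  assumes br_l: "linear (\<lambda>x. br x y)" and br_r: "linear (br x)"
    and m_l: "linear (\<lambda>x. m x y)" and m_r: "linear (m x)" and m_sym: "m x y = m y x"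
begin

lemma m_add_l: "m (x + x') y = m x y + m x' y" using linear_add[OF m_l] by simp
lemma m_add_r: "m y (x + x') = m y x + m y x'" using linear_add[OF m_r] by simp
lemma m_diff_l: "m (x - x') y = m x y - m x' y" using linear_diff[OF m_l] by simp
lemma m_diff_r: "m y (x - x') = m y x - m y x'" using linear_diff[OF m_r] by simp
lemma m_scale_l: "m (c *\<^sub>R x) y = c * m x y" using linear_scale[OF m_l] by simp
lemma m_scale_r: "m y (c *\<^sub>R x) = c * m y x" using linear_scale[OF m_r] by simp
lemma m_neg_l: "m (- x) y = - m x y" using linear_neg[OF m_l] by simp
lemma m_neg_r: "m y (- x) = - m y x" using linear_neg[OF m_r] by simp
lemma m_zero_l: "m 0 y = 0" using linear_0[OF m_l] by simp
lemma m_zero_r: "m y 0 = 0" using linear_0[OF m_r] by simp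
lemma m_sum_l: "m (sum f S) y = (\<Sum>i\<in>S. m (f i) y)" using linear_sum[OF m_l] by simp
lemma m_sum_r: "m y (sum f S) = (\<Sum>i\<in>S. m y (f i))" using linear_sum[OF m_r] by simp

lemma br_add_l: "br (x + x') y = br x y + br x' y" using linear_add[OF br_l] by simp
lemma br_add_r: "br y (x + x') = br y x + br y x'" using linear_add[OF br_r] by simp
lemma br_diff_l: "br (x - x') y = br x y - br x' y" using linear_diff[OF br_l] by simp
lemma br_diff_r: "br y (x - x') = br y x - br y x'" using linear_diff[OF br_r] by simp
lemma br_scale_l: "br (c *\<^sub>R x) y = c *\<^sub>R br x y" using linear_scale[OF br_l] by simp
lemma br_scale_r: "br y (c *\<^sub>R x) = c *\<^sub>R br y x" using linear_scale[OF br_r] by simp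
lemma br_neg_l: "br (- x) y = - br x y" using linear_neg[OF br_l] by simp
lemma br_neg_r: "br y (- x) = - br y x" using linear_neg[OF br_r] by simp
lemma br_zero_l: "br 0 y = 0" using linear_0[OF br_l] by simp
lemma br_zero_r: "br y 0 = 0" using linear_0[OF br_r] by simp
lemma br_sum_l: "br (sum f S) y = (\<Sum>i\<in>S. br (f i) y)" using linear_sum[OF br_l] by simp
lemma br_sum_r: "br y (sum f S) = (\<Sum>i\<in>S. br y (f i))" using linear_sum[OF br_r] by simp

lemmas mb_simps = m_add_l m_add_r m_diff_l m_diff_r m_scale_l m_scale_r m_neg_l m_neg_r m_zero_l m_zero_r
  m_sum_l m_sum_r br_add_l br_add_r br_diff_l br_diff_r br_scale_l br_scale_r br_neg_l br_neg_r
  br_zero_l br_zero_r br_sum_l br_sum_r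

definition nondeg :: "'v set \<Rightarrow> bool" where
  "nondeg V \<longleftrightarrow> (\<forall>x\<in>V. (\<forall>y\<in>V. m x y = 0) \<longrightarrow> x = 0)"

lemma nondeg_unique:
  assumes "subspace V" "nondeg V" "w \<in> V" "w' \<in> V" "\<And>z. z \<in> V \<Longrightarrow> m w z = m w' z"
  shows "w = w'"
proof -
  have "w - w' \<in> V" using assms by (simp add: subspace_diff)
  moreover have "\<forall>y\<in>V. m (w - w') y = 0" using assms(5) by (simp add: m_diff_l)
  ultimately show ?thesis using assms(2) unfolding nondeg_def by auto
qed

lemma fun_sum_on:
  assumes "subspace V" and add: "\<And>x y. x \<in> V \<Longrightarrow> y \<in> V \<Longrightarrow> phi (x + y) = phi x + phi y"
    and zero: "phi 0 = 0"
    and "finite S" "\<And>i. i \<in> S \<Longrightarrow> f i \<in> V"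
  shows "phi (\<Sum>i\<in>S. f i) = (\<Sum>i\<in>S. phi (f i))"
  using assms(4,5)
proof (induction S rule: finite_induct)
  case empty then show ?case by (simp add: zero)
next
  case (insert x F)
  have "(\<Sum>i\<in>F. f i) \<in> V" using insert assms(1) by (auto intro: subspace_sum)
  then show ?case using insert by (simp add: add)
qed

lemma riesz:
  assumes V: "subspace V" and nd: "nondeg V"
    and padd: "\<And>x y. x \<in> V \<Longrightarrow> y \<in> V \<Longrightarrow> phi (x + y) = phi x + phi y"
    and pscale: "\<And>x c. x \<in> V \<Longrightarrow> phi (c *\<^sub>R x) = c * phi x"
  shows "\<exists>w\<in>V. \<forall>z\<in>V. m w z = phi z"
proof -
  obtain B where B: "B \<subseteq> V" "independent B" "V \<subseteq> span B"
    using basis_exists[of V] by metis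
  have fin: "finite B" using B(2) independent_bound by blast
  have spanB: "span B = V"
  proof -
    have "span B \<subseteq> V" using span_minimal[OF B(1) V] .
    then show ?thesis using B by auto
  qed
  have p0: "phi 0 = 0" using pscale[of 0 0] V by (simp add: subspace_0)
  have psum: "phi (\<Sum>b\<in>B. c b *\<^sub>R b) = (\<Sum>b\<in>B. c b * phi b)" for c
  proof -
    have "phi (\<Sum>b\<in>B. c b *\<^sub>R b) = (\<Sum>b\<in>B. phi (c b *\<^sub>R b))"
      by (rule fun_sum_on[OF V padd p0 fin]) (use B V in \<open>auto intro: subspace_scale\<close>)
    also have "\<dots> = (\<Sum>b\<in>B. c b * phi b)" using B by (auto intro!: sum.cong pscale)
    finally show ?thesis .
  qed
  have expand: "z = (\<Sum>b\<in>B. representation B z b *\<^sub>R b)" if "z \<in> V" for z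
    using sum_representation_eq[of B z B] B(2) fin that spanB by auto
  define T where "T w = (\<Sum>b\<in>B. m w b *\<^sub>R b)" for w
  have linT: "linear T"
    by (rule linearI) (simp_all add: T_def m_add_l m_scale_l scaleR_add_left sum.distrib scaleR_sum_right)
  have TV: "T ` V \<subseteq> V"
    using B V by (auto simp: T_def intro!: subspace_sum subspace_scale)
  have "inj_on T V"
    unfolding real_vector.linear_inj_on_iff_eq_0[OF linT V]
  proof (intro ballI impI)
    fix w assume w: "w \<in> V" "T w = 0"
    have mb: "\<forall>b\<in>B. m w b = 0"
      using w(2) B(2) unfolding T_def independent_explicit by blast
    have "\<forall>z\<in>V. m w z = 0"
    proof
      fix z assume "z \<in> V"
      then have "m w z = m w (\<Sum>b\<in>B. representation B z b *\<^sub>R b)" using expand by metis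
      also have "\<dots> = 0" using mb by (simp add: m_sum_r m_scale_r)
      finally show "m w z = 0" .
    qed
    then show "w = 0" using nd w(1) unfolding nondeg_def by blast
  qed
  moreover have sV: "span V = V" using V span_eq_iff[of V] by blast
  ultimately have "inj_on T (span V)" unfolding sV by blast
  then have "dim (T ` V) = dim V" using dim_image_eq[OF linT, of V] by blast
  then have TVe: "T ` V = V"
    using subspace_dim_equal[OF real_vector.linear_subspace_image[OF linT V] V TV] by simp
  define t where "t = (\<Sum>b\<in>B. phi b *\<^sub>R b)"
  have "t \<in> V" using B V by (auto simp: t_def intro!: subspace_sum subspace_scale)
  then obtain w where w: "w \<in> V" "T w = t" using TVe by force
  have "(\<Sum>b\<in>B. (m w b - phi b) *\<^sub>R b) = 0"
    using w(2) by (simp add: T_def t_def scaleR_diff_left sum_subtractf)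
  then have eqb: "\<forall>b\<in>B. m w b = phi b"
    using B(2) unfolding independent_explicit by (metis eq_iff_diff_eq_0)
  have "\<forall>z\<in>V. m w z = phi z"
  proof
    fix z assume z: "z \<in> V"
    have "m w z = m w (\<Sum>b\<in>B. representation B z b *\<^sub>R b)" using expand z by metis
    also have "\<dots> = (\<Sum>b\<in>B. representation B z b * phi b)"
      using eqb by (simp add: m_sum_r m_scale_r)
    also have "\<dots> = phi (\<Sum>b\<in>B. representation B z b *\<^sub>R b)" using psum by simp
    also have "\<dots> = phi z" using expand z by metis
    finally show "m w z = phi z" .
  qed
  with w(1) show ?thesis by blast
qed

definition frame :: "'v set \<Rightarrow> 'v set \<Rightarrow> ('v \<Rightarrow> 'v) \<Rightarrow> bool" where
  "frame V B d \<longleftrightarrow> finite B \<and> B \<subseteq> V \<and> (\<forall>b\<in>B. d b \<in> V) \<and>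
     (\<forall>b\<in>B. \<forall>c\<in>B. m c (d b) = (if c = b then 1 else 0)) \<and>
     (\<forall>w\<in>V. w = (\<Sum>b\<in>B. m w (d b) *\<^sub>R b))"

lemma frame_of_basis:
  assumes V: "subspace V" and nd: "nondeg V" and B: "B \<subseteq> V" "independent B" "span B = V"
  shows "\<exists>d. frame V B d \<and> (\<forall>w\<in>V. \<forall>b\<in>B. m w (d b) = representation B w b)"
proof -
  have fin: "finite B" using B(2) independent_bound by blast
  have "\<forall>b\<in>B. \<exists>w\<in>V. \<forall>z\<in>V. m w z = representation B z b"
  proof
    fix b assume "b \<in> B"
    show "\<exists>w\<in>V. \<forall>z\<in>V. m w z = representation B z b"
      by (rule riesz[OF V nd]) (use B in \<open>simp_all add: representation_add representation_scale\<close>)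
  qed
  then obtain d where d: "\<forall>b\<in>B. d b \<in> V \<and> (\<forall>z\<in>V. m (d b) z = representation B z b)"
    by metis
  have rep: "\<forall>w\<in>V. \<forall>b\<in>B. m w (d b) = representation B w b" using d m_sym by metis
  have "frame V B d"
    unfolding frame_def
  proof (intro conjI ballI)
    show "finite B" by fact
    show "B \<subseteq> V" by fact
    show "d b \<in> V" if "b \<in> B" for b using d that by blast
    show "m c (d b) = (if c = b then 1 else 0)" if "b \<in> B" "c \<in> B" for b c
      using rep that B representation_basis[OF B(2) that(2)] by auto
    show "w = (\<Sum>b\<in>B. m w (d b) *\<^sub>R b)" if "w \<in> V" for w
    proof -
      have "w = (\<Sum>b\<in>B. representation B w b *\<^sub>R b)"
        using sum_representation_eq[of B w B] B fin that by auto
      also have "\<dots> = (\<Sum>b\<in>B. m w (d b) *\<^sub>R b)" using rep that by auto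
      finally show ?thesis .
    qed
  qed
  with rep show ?thesis by blast
qed

lemma subspace_basis:
  assumes "subspace V"
  shows "\<exists>B. B \<subseteq> V \<and> independent B \<and> span B = V"
proof -
  obtain B where B: "B \<subseteq> V" "independent B" "V \<subseteq> span B"
    using basis_exists[of V] by metis
  have "span B \<subseteq> V" using span_minimal[OF B(1) assms] .
  then show ?thesis using B by blast
qed

lemma frame_exists:
  assumes "subspace V" "nondeg V"
  shows "\<exists>B d. frame V B d"
  using subspace_basis[OF assms(1)] frame_of_basis[OF assms] by blast

lemma linear_on_sum:
  assumes V: "subspace V" and f: "linear_on V f" and "finite S" "\<And>i. i \<in> S \<Longrightarrow> x i \<in> V"
  shows "f (\<Sum>i\<in>S. x i) = (\<Sum>i\<in>S. f (x i))"
proof (rule fun_sum_on[OF V _ _ assms(3,4)])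
  show "f (a + b) = f a + f b" if "a \<in> V" "b \<in> V" for a b using f that unfolding linear_on_def by blast
  have "f (0 *\<^sub>R 0) = 0 *\<^sub>R f 0" using f V subspace_0 unfolding linear_on_def by blast
  then show "f 0 = 0" by simp
qed

lemma linear_on_scale:
  "linear_on V f \<Longrightarrow> x \<in> V \<Longrightarrow> f (c *\<^sub>R x) = c *\<^sub>R f x"
  unfolding linear_on_def by blast

lemma linear_on_in:
  "linear_on V f \<Longrightarrow> x \<in> V \<Longrightarrow> f x \<in> V"
  unfolding linear_on_def by blast

lemma trace_invariant:
  assumes V: "subspace V" and B: "frame V B d" and C: "frame V C e" and f: "linear_on V f"
  shows "(\<Sum>b\<in>B. m (f b) (d b)) = (\<Sum>c\<in>C. m (f c) (e c))"
proof -
  have Bf: "finite B" "B \<subseteq> V" "\<forall>b\<in>B. d b \<in> V" "\<forall>w\<in>V. w = (\<Sum>b\<in>B. m w (d b) *\<^sub>R b)"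
    using B unfolding frame_def by auto
  have Cf: "finite C" "C \<subseteq> V" "\<forall>c\<in>C. e c \<in> V" "\<forall>w\<in>V. w = (\<Sum>c\<in>C. m w (e c) *\<^sub>R c)"
    using C unfolding frame_def by auto
  have "(\<Sum>b\<in>B. m (f b) (d b)) = (\<Sum>b\<in>B. m (f (\<Sum>c\<in>C. m b (e c) *\<^sub>R c)) (d b))"
  proof (intro sum.cong refl)
    fix b assume "b \<in> B"
    then have "b = (\<Sum>c\<in>C. m b (e c) *\<^sub>R c)" using Cf(4) Bf(2) by blast
    then show "m (f b) (d b) = m (f (\<Sum>c\<in>C. m b (e c) *\<^sub>R c)) (d b)" by simp
  qed
  also have "\<dots> = (\<Sum>b\<in>B. \<Sum>c\<in>C. m b (e c) * m (f c) (d b))"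
  proof (intro sum.cong refl)
    fix b assume "b \<in> B"
    have "f (\<Sum>c\<in>C. m b (e c) *\<^sub>R c) = (\<Sum>c\<in>C. f (m b (e c) *\<^sub>R c))"
      by (rule linear_on_sum[OF V f Cf(1)]) (use Cf(2) V in \<open>auto intro: subspace_scale\<close>)
    also have "\<dots> = (\<Sum>c\<in>C. m b (e c) *\<^sub>R f c)"
      using Cf(2) f by (intro sum.cong refl) (auto intro: linear_on_scale)
    finally show "m (f (\<Sum>c\<in>C. m b (e c) *\<^sub>R c)) (d b) = (\<Sum>c\<in>C. m b (e c) * m (f c) (d b))"
      by (simp add: m_sum_l m_scale_l)
  qed
  also have "\<dots> = (\<Sum>c\<in>C. \<Sum>b\<in>B. m b (e c) * m (f c) (d b))" by (rule sum.swap)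
  also have "\<dots> = (\<Sum>c\<in>C. m (f c) (e c))"
  proof (intro sum.cong refl)
    fix c assume c: "c \<in> C"
    have fc: "f c \<in> V" using f c Cf(2) unfolding linear_on_def by blast
    have "(\<Sum>b\<in>B. m b (e c) * m (f c) (d b)) = m (\<Sum>b\<in>B. m (f c) (d b) *\<^sub>R b) (e c)"
      by (simp add: m_sum_l m_scale_l mult.commute)
    also have "\<dots> = m (f c) (e c)" using Bf(4) fc by metis
    finally show "(\<Sum>b\<in>B. m b (e c) * m (f c) (d b)) = m (f c) (e c)" .
  qed
  finally show ?thesis .
qed

lemma trace_frame:
  assumes V: "subspace V" and nd: "nondeg V" and B: "frame V B d" and f: "linear_on V f"
  shows "trace_on V f = (\<Sum>b\<in>B. m (f b) (d b))"
proof -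
  define B0 where "B0 = (SOME B. B \<subseteq> V \<and> independent B \<and> span B = V)"
  have B0: "B0 \<subseteq> V \<and> independent B0 \<and> span B0 = V"
    unfolding B0_def by (rule someI_ex) (rule subspace_basis[OF V])
  then obtain d0 where d0: "frame V B0 d0" "\<forall>w\<in>V. \<forall>b\<in>B0. m w (d0 b) = representation B0 w b"
    using frame_of_basis[OF V nd] by blast
  have "trace_on V f = (\<Sum>b\<in>B0. representation B0 (f b) b)"
    unfolding trace_on_def B0_def[symmetric] Let_def ..
  also have "\<dots> = (\<Sum>b\<in>B0. m (f b) (d0 b))"
    using d0(2) B0 f unfolding linear_on_def by (intro sum.cong refl) auto
  also have "\<dots> = (\<Sum>b\<in>B. m (f b) (d b))"
    by (rule trace_invariant[OF V d0(1) B f])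
  finally show ?thesis .
qed

definition K :: "'v \<Rightarrow> 'v \<Rightarrow> 'v \<Rightarrow> real" where
  "K x y z = m (br x y) z - m (br y z) x + m (br z x) y"

lemma K_add3: "K x y (z + z') = K x y z + K x y z'"
  unfolding K_def by (simp add: mb_simps)
lemma K_scale3: "K x y (c *\<^sub>R z) = c * K x y z"
  unfolding K_def by (simp add: mb_simps algebra_simps)
lemma K_add1: "K (x + x') y z = K x y z + K x' y z"
  unfolding K_def by (simp add: mb_simps)
lemma K_scale1: "K (c *\<^sub>R x) y z = c * K x y z"
  unfolding K_def by (simp add: mb_simps algebra_simps)
lemma K_add2: "K x (y + y') z = K x y z + K x y' z"
  unfolding K_def by (simp add: mb_simps)
lemma K_scale2: "K x (c *\<^sub>R y) z = c * K x y z"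
  unfolding K_def by (simp add: mb_simps algebra_simps)

context
  fixes V assumes V: "subspace V" and nd: "nondeg V"
begin

lemma nabla_char:
  "lc_nabla V br m x y \<in> V \<and> (\<forall>z\<in>V. 2 * m (lc_nabla V br m x y) z = K x y z)"
proof -
  obtain w where w: "w \<in> V" "\<forall>z\<in>V. m w z = K x y z / 2"
    using riesz[OF V nd, of "\<lambda>z. K x y z / 2"] by (auto simp: K_add3 K_scale3 add_divide_distrib)
  have P: "w \<in> V \<and> (\<forall>z\<in>V. 2 * m w z = m (br x y) z - m (br y z) x + m (br z x) y)"
    using w by (simp add: K_def mult.commute)
  have "lc_nabla V br m x y = w"
    unfolding lc_nabla_def
  proof (rule the_equality)
    show "w \<in> V \<and> (\<forall>z\<in>V. 2 * m w z = m (br x y) z - m (br y z) x + m (br z x) y)" by (rule P)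
    fix w' assume "w' \<in> V \<and> (\<forall>z\<in>V. 2 * m w' z = m (br x y) z - m (br y z) x + m (br z x) y)"
    then show "w' = w" using P by (intro nondeg_unique[OF V nd]) (auto, metis mult_cancel_left zero_neq_numeral)
  qed
  then show ?thesis using P by (simp add: K_def)
qed

lemma nabla_in: "lc_nabla V br m x y \<in> V" using nabla_char by blast

lemma nabla_eqI:
  assumes "w \<in> V" "\<And>z. z \<in> V \<Longrightarrow> 2 * m w z = K x y z"
  shows "lc_nabla V br m x y = w"
proof (rule nondeg_unique[OF V nd])
  show "lc_nabla V br m x y \<in> V" "w \<in> V" using nabla_char assms by auto
  fix z assume "z \<in> V"
  then have "2 * m (lc_nabla V br m x y) z = 2 * m w z" using nabla_char assms by auto
  then show "m (lc_nabla V br m x y) z = m w z" by simp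
qed

lemma nabla_add1: "lc_nabla V br m (x + x') y = lc_nabla V br m x y + lc_nabla V br m x' y"
  by (rule nabla_eqI) (use nabla_char V in \<open>auto simp: K_add1 m_add_l distrib_left intro: subspace_add\<close>)
lemma nabla_add2: "lc_nabla V br m x (y + y') = lc_nabla V br m x y + lc_nabla V br m x y'"
  by (rule nabla_eqI) (use nabla_char V in \<open>auto simp: K_add2 m_add_l distrib_left intro: subspace_add\<close>)
lemma nabla_scale1: "lc_nabla V br m (c *\<^sub>R x) y = c *\<^sub>R lc_nabla V br m x y"
  by (rule nabla_eqI) (use nabla_char V in \<open>auto simp: K_scale1 m_scale_l intro: subspace_scale\<close>)
lemma nabla_scale2: "lc_nabla V br m x (c *\<^sub>R y) = c *\<^sub>R lc_nabla V br m x y"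
  by (rule nabla_eqI) (use nabla_char V in \<open>auto simp: K_scale2 m_scale_l intro: subspace_scale\<close>)

lemma nabla_lin1: "linear (\<lambda>x. lc_nabla V br m x y)"
  by (rule linearI) (simp_all add: nabla_add1 nabla_scale1)
lemma nabla_lin2: "linear (lc_nabla V br m x)"
  by (rule linearI) (simp_all add: nabla_add2 nabla_scale2)

lemma nabla_0_1: "lc_nabla V br m 0 y = 0" using linear_0[OF nabla_lin1] by simp
lemma nabla_0_2: "lc_nabla V br m x 0 = 0" using linear_0[OF nabla_lin2] by simp
lemma nabla_neg1: "lc_nabla V br m (- x) y = - lc_nabla V br m x y" using linear_neg[OF nabla_lin1] by simp
lemma nabla_neg2: "lc_nabla V br m x (- y) = - lc_nabla V br m x y" using linear_neg[OF nabla_lin2] by simp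
lemma nabla_diff1: "lc_nabla V br m (x - x') y = lc_nabla V br m x y - lc_nabla V br m x' y"
  using linear_diff[OF nabla_lin1] by simp
lemma nabla_diff2: "lc_nabla V br m x (y - y') = lc_nabla V br m x y - lc_nabla V br m x y'"
  using linear_diff[OF nabla_lin2] by simp

lemma curv_in: "curvature V br m x y z \<in> V"
  unfolding curvature_def using nabla_in V by (intro subspace_diff) auto

lemma curv_add1: "curvature V br m (x + x') y z = curvature V br m x y z + curvature V br m x' y z"
  unfolding curvature_def by (simp add: nabla_add1 nabla_add2 br_add_l algebra_simps)
lemma curv_scale1: "curvature V br m (c *\<^sub>R x) y z = c *\<^sub>R curvature V br m x y z"
  unfolding curvature_def by (simp add: nabla_scale1 nabla_scale2 br_scale_l algebra_simps)
lemma curv_add3: "curvature V br m x y (z + z') = curvature V br m x y z + curvature V br m x y z'"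
  unfolding curvature_def by (simp add: nabla_add1 nabla_add2 algebra_simps)
lemma curv_scale3: "curvature V br m x y (c *\<^sub>R z) = c *\<^sub>R curvature V br m x y z"
  unfolding curvature_def by (simp add: nabla_scale1 nabla_scale2 algebra_simps)

lemma curv_linear_on: "linear_on V (\<lambda>x. curvature V br m x y z)"
  unfolding linear_on_def by (simp add: curv_in curv_add1 curv_scale1)

lemma ric_frame:
  assumes "frame V B d"
  shows "ricci_tensor V br m y z = (\<Sum>b\<in>B. m (curvature V br m b y z) (d b))"
  unfolding ricci_tensor_def by (rule trace_frame[OF V nd assms curv_linear_on])

lemma ricci_char:
  "ricci_op V br m y \<in> V \<and> (\<forall>z\<in>V. m (ricci_op V br m y) z = ricci_tensor V br m y z)"
proof -
  obtain B d where B: "frame V B d" using frame_exists[OF V nd] by blast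
  obtain w where w: "w \<in> V" "\<forall>z\<in>V. m w z = ricci_tensor V br m y z"
    using riesz[OF V nd, of "\<lambda>z. ricci_tensor V br m y z"]
    by (auto simp: ric_frame[OF B] curv_add3 curv_scale3 m_add_l m_scale_l sum.distrib sum_distrib_left)
  have "ricci_op V br m y = w"
    unfolding ricci_op_def
  proof (rule the_equality)
    show "w \<in> V \<and> (\<forall>z\<in>V. m w z = ricci_tensor V br m y z)" using w by blast
    fix w' assume "w' \<in> V \<and> (\<forall>z\<in>V. m w' z = ricci_tensor V br m y z)"
    then show "w' = w" using w by (intro nondeg_unique[OF V nd]) auto
  qed
  then show ?thesis using w by simp
qed

lemma ricci_eqI:
  assumes "w \<in> V" "\<And>z. z \<in> V \<Longrightarrow> m w z = ricci_tensor V br m y z"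
  shows "ricci_op V br m y = w"
  using ricci_char assms by (intro nondeg_unique[OF V nd]) auto

end

end



locale setting =
  fixes br :: "'v::euclidean_space \<Rightarrow> 'v \<Rightarrow> 'v" and m :: "'v \<Rightarrow> 'v \<Rightarrow> real"
    and lam :: real and g a :: "'v set"
  assumes lie: "lie_algebra UNIV br" and met: "metric_on UNIV m"
    and ric: "\<forall>x. ricci_op UNIV br m x = lam *\<^sub>R x" and lam: "lam \<noteq> 0"
    and pi: "pseudo_iwasawa UNIV br m g a"
begin

sublocale base br m
proof -
  have b: "bilinear_on UNIV br" using lie unfolding lie_algebra_def by blast
  have mb: "bilinear_on UNIV m" using met unfolding metric_on_def by blast
  have sy: "\<forall>x y. m x y = m y x" using met unfolding metric_on_def by blast
  show "base br m" by unfold_locales (use b mb sy in \<open>simp_all add: bilinear_on_def\<close>)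
qed

lemma br_alt: "br x x = 0" using lie unfolding lie_algebra_def by blast
lemma br_anti: "br x y = - br y x"
proof -
  have "br (x + y) (x + y) = br x y + br y x" by (simp only: br_add_l br_add_r) (simp add: br_alt)
  then have "br x y + br y x = 0" using br_alt[of "x + y"] by simp
  then show ?thesis by (simp add: eq_neg_iff_add_eq_0)
qed
lemma jacobi: "br x (br y z) + br y (br z x) + br z (br x y) = 0"
  using lie unfolding lie_algebra_def by blast
lemma br_der: "br x (br y z) = br (br x y) z + br y (br x z)"
proof -
  have j: "br x (br y z) + br y (br z x) + br z (br x y) = 0" by (rule jacobi)
  have 1: "br y (br z x) = - br y (br x z)" using br_anti[of z x] br_neg_r by simp
  have 2: "br z (br x y) = - br (br x y) z" by (rule br_anti)
  from j show ?thesis unfolding 1 2 by (simp add: algebra_simps)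
qed

lemma g_sub: "subspace g" using pi unfolding pseudo_iwasawa_def ideal_def by blast
lemma a_sub: "subspace a" using pi unfolding pseudo_iwasawa_def abelian_subalgebra_def by blast
lemma g_id: "y \<in> g \<Longrightarrow> br x y \<in> g" using pi unfolding pseudo_iwasawa_def ideal_def by blast
lemma g_id2: "y \<in> g \<Longrightarrow> br y x \<in> g" using g_id[of y x] br_anti[of y x] g_sub subspace_neg by metis
lemma a_ab: "X \<in> a \<Longrightarrow> Y \<in> a \<Longrightarrow> br X Y = 0"
  using pi unfolding pseudo_iwasawa_def abelian_subalgebra_def by blast
lemma ga0: "x \<in> g \<Longrightarrow> x \<in> a \<Longrightarrow> x = 0" using pi unfolding pseudo_iwasawa_def by blast
lemma dec: "\<exists>x\<in>g. \<exists>y\<in>a. v = x + y" using pi unfolding pseudo_iwasawa_def by blast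
lemma orth: "x \<in> g \<Longrightarrow> y \<in> a \<Longrightarrow> m x y = 0" using pi unfolding pseudo_iwasawa_def by blast
lemma orth': "x \<in> g \<Longrightarrow> y \<in> a \<Longrightarrow> m y x = 0" using orth m_sym by metis
lemma sa: "X \<in> a \<Longrightarrow> m (br X u) w = m u (br X w)" using pi unfolding pseudo_iwasawa_def by blast
lemma adg: "X \<in> a \<Longrightarrow> br X z \<in> g"
proof -
  assume X: "X \<in> a"
  obtain zg za where z: "zg \<in> g" "za \<in> a" "z = zg + za" using dec by blast
  then show ?thesis using X g_id[of zg X] a_ab[of X za] by (simp add: br_add_r)
qed

lemma nd_univ: "nondeg UNIV" using met unfolding metric_on_def nondeg_def by blast
lemma nd_g: "nondeg g"
  unfolding nondeg_def
proof (intro ballI impI)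
  fix x assume x: "x \<in> g" and h: "\<forall>y\<in>g. m x y = 0"
  have "\<forall>z. m x z = 0"
  proof
    fix z obtain zg za where "zg \<in> g" "za \<in> a" "z = zg + za" using dec by blast
    then show "m x z = 0" using h x orth by (simp add: m_add_r)
  qed
  then show "x = 0" using nd_univ unfolding nondeg_def by blast
qed
lemma nd_a: "nondeg a"
  unfolding nondeg_def
proof (intro ballI impI)
  fix x assume x: "x \<in> a" and h: "\<forall>y\<in>a. m x y = 0"
  have "\<forall>z. m x z = 0"
  proof
    fix z obtain zg za where "zg \<in> g" "za \<in> a" "z = zg + za" using dec by blast
    then show "m x z = 0" using h x orth' by (simp add: m_add_r)
  qed
  then show "x = 0" using nd_univ unfolding nondeg_def by blast
qed

abbreviation "N \<equiv> lc_nabla UNIV br m"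
abbreviation "Ng \<equiv> lc_nabla g br m"

definition alpha :: "'v \<Rightarrow> 'v \<Rightarrow> 'v" where
  "alpha u v = (SOME w. w \<in> a \<and> (\<forall>Y\<in>a. m w Y = m (br Y u) v))"

lemma alpha_char: "alpha u v \<in> a \<and> (\<forall>Y\<in>a. m (alpha u v) Y = m (br Y u) v)"
proof -
  have "\<exists>w\<in>a. \<forall>Y\<in>a. m w Y = m (br Y u) v"
    by (rule riesz[OF a_sub nd_a]) (simp_all add: br_add_l br_scale_l m_add_l m_scale_l)
  then show ?thesis unfolding alpha_def by (rule someI2_bex) blast
qed

end



context setting begin

lemma decomp: obtains zg za where "zg \<in> g" "za \<in> a" "z = zg + za"
  using dec by blast

lemma univ_sub: "subspace (UNIV :: 'v set)" by (rule subspace_UNIV)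

lemma N1: assumes u: "u \<in> g" and v: "v \<in> g" shows "N u v = Ng u v + alpha u v"
proof (rule nabla_eqI[OF univ_sub nd_univ])
  show "Ng u v + alpha u v \<in> UNIV" by simp
  fix z :: 'v
  obtain zg za where z: "zg \<in> g" "za \<in> a" "z = zg + za" by (rule decomp)
  have ng: "Ng u v \<in> g" by (rule nabla_in[OF g_sub nd_g])
  have al: "alpha u v \<in> a" using alpha_char by blast
  have c1: "2 * m (Ng u v) zg = K u v zg" using nabla_char[OF g_sub nd_g] z(1) by blast
  have c2: "m (Ng u v) za = 0" using orth ng z(2) by blast
  have c3: "m (alpha u v) zg = 0" using orth' al z(1) by blast
  have c4: "m (alpha u v) za = m (br za u) v" using alpha_char z(2) by blast
  have k: "K u v za = 2 * m (br za u) v"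
  proof -
    have "m (br u v) za = 0" using orth g_id v z(2) by blast
    moreover have "m (br v za) u = - m (br za u) v"
      using br_anti[of v za] sa[OF z(2), of v u] m_sym[of v "br za u"] by (simp add: m_neg_l)
    ultimately show ?thesis unfolding K_def by simp
  qed
  show "2 * m (Ng u v + alpha u v) z = K u v z"
    unfolding z(3) by (simp add: K_add3 m_add_l m_add_r c1 c2 c3 c4 k algebra_simps)
qed

lemma N2: assumes u: "u \<in> g" and Y: "Y \<in> a" shows "N u Y = - br Y u"
proof (rule nabla_eqI[OF univ_sub nd_univ])
  show "- br Y u \<in> UNIV" by simp
  fix z :: 'v
  obtain zg za where z: "zg \<in> g" "za \<in> a" "z = zg + za" by (rule decomp)
  have bYu: "br Y u \<in> g" using g_id u by blast
  have k1: "K u Y zg = - 2 * m (br Y u) zg"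
  proof -
    have "m (br u Y) zg = - m (br Y u) zg" using br_anti[of u Y] by (simp add: m_neg_l)
    moreover have "m (br Y zg) u = m (br Y u) zg" using sa[OF Y, of zg u] m_sym[of zg "br Y u"] by simp
    moreover have "m (br zg u) Y = 0" using orth g_id2 z(1) Y by blast
    ultimately show ?thesis unfolding K_def by simp
  qed
  have k2: "K u Y za = 0"
  proof -
    have "m (br u Y) za = 0" using orth g_id2 u z(2) by blast
    moreover have "br Y za = 0" using a_ab Y z(2) by blast
    moreover have "m (br za u) Y = 0" using orth g_id u Y by blast
    ultimately show ?thesis unfolding K_def by (simp add: m_zero_l)
  qed
  have o: "m (br Y u) za = 0" using orth bYu z(2) by blast
  show "2 * m (- br Y u) z = K u Y z"
    unfolding z(3) by (simp add: K_add3 m_neg_l m_add_r k1 k2 o)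
qed

lemma N3g: assumes X: "X \<in> a" and u: "u \<in> g" shows "N X u = 0"
proof (rule nabla_eqI[OF univ_sub nd_univ])
  fix z :: 'v
  obtain zg za where z: "zg \<in> g" "za \<in> a" "z = zg + za" by (rule decomp)
  have k1: "K X u zg = 0"
  proof -
    have "m (br u zg) X = 0" by (rule orth[OF g_id[OF z(1)] X])
    moreover have "m (br zg X) u = - m (br X u) zg"
      using br_anti[of zg X] sa[OF X, of zg u] m_sym[of zg "br X u"] by (simp add: m_neg_l)
    ultimately show ?thesis unfolding K_def by simp
  qed
  have k2: "K X u za = 0"
  proof -
    have "m (br X u) za = 0" using orth g_id u z(2) by blast
    moreover have "m (br u za) X = 0" by (rule orth[OF g_id2[OF u] X])
    moreover have "br za X = 0" using a_ab X z(2) by blast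
    ultimately show ?thesis unfolding K_def by (simp add: m_zero_l)
  qed
  show "2 * m 0 z = K X u z" unfolding z(3) by (simp add: K_add3 k1 k2 m_zero_l)
qed simp

lemma N3a: assumes X: "X \<in> a" and Y: "Y \<in> a" shows "N X Y = 0"
proof (rule nabla_eqI[OF univ_sub nd_univ])
  fix z :: 'v
  have "br X Y = 0" using a_ab X Y by blast
  moreover have "m (br Y z) X = 0" by (rule orth[OF adg[OF Y] X])
  moreover have "m (br z X) Y = 0"
    using orth[OF adg[OF X, of z] Y] br_anti[of z X] by (simp add: m_neg_l)
  ultimately show "2 * m 0 z = K X Y z" unfolding K_def by (simp add: m_zero_l)
qed simp

lemma N3: assumes X: "X \<in> a" shows "N X w = 0"
proof -
  obtain wg wa where w: "wg \<in> g" "wa \<in> a" "w = wg + wa" by (rule decomp)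
  then show ?thesis using N3g[OF X w(1)] N3a[OF X w(2)] nabla_add2[OF univ_sub nd_univ] by simp
qed

end



locale setting2 = setting br m lam g a
  for br :: "'v::euclidean_space \<Rightarrow> 'v \<Rightarrow> 'v" and m lam g a +
  fixes E F :: "'v set" and dE dF :: "'v \<Rightarrow> 'v"
  assumes fE: "frame g E dE" and fF: "frame a F dF"
begin

lemma E_fin: "finite E" and E_sub: "E \<subseteq> g" and dE_in: "\<And>e. e \<in> E \<Longrightarrow> dE e \<in> g"
  and E_delta: "\<And>b c. b \<in> E \<Longrightarrow> c \<in> E \<Longrightarrow> m c (dE b) = (if c = b then 1 else 0)"
  and E_exp: "\<And>w. w \<in> g \<Longrightarrow> w = (\<Sum>b\<in>E. m w (dE b) *\<^sub>R b)"
  using fE unfolding frame_def by auto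

lemma F_fin: "finite F" and F_sub: "F \<subseteq> a" and dF_in: "\<And>e. e \<in> F \<Longrightarrow> dF e \<in> a"
  and F_delta: "\<And>b c. b \<in> F \<Longrightarrow> c \<in> F \<Longrightarrow> m c (dF b) = (if c = b then 1 else 0)"
  and F_exp: "\<And>w. w \<in> a \<Longrightarrow> w = (\<Sum>b\<in>F. m w (dF b) *\<^sub>R b)"
  using fF unfolding frame_def by auto

lemma EF_disj: "E \<inter> F = {}"
proof (rule ccontr)
  assume "E \<inter> F \<noteq> {}"
  then obtain e where e: "e \<in> E" "e \<in> F" by blast
  then have "e = 0" using E_sub F_sub ga0 by blast
  moreover have "m e (dE e) = 1" using E_delta e by simp
  ultimately show False by (simp add: m_zero_l)
qed

definition dU :: "'v \<Rightarrow> 'v" where "dU b = (if b \<in> E then dE b else dF b)"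

lemma fU: "frame UNIV (E \<union> F) dU"
  unfolding frame_def
proof (intro conjI ballI)
  show "finite (E \<union> F)" using E_fin F_fin by simp
  show "E \<union> F \<subseteq> UNIV" by simp
  show "dU b \<in> UNIV" for b by simp
  show "m c (dU b) = (if c = b then 1 else 0)" if bc: "b \<in> E \<union> F" "c \<in> E \<union> F" for b c
  proof -
    consider "b \<in> E" "c \<in> E" | "b \<in> E" "c \<in> F" | "b \<in> F" "c \<in> E" | "b \<in> F" "c \<in> F"
      using bc by blast
    then show ?thesis
    proof cases
      case 1 then show ?thesis using E_delta by (simp add: dU_def)
    next
      case 2
      then have "c \<noteq> b" using EF_disj by blast
      moreover have "m c (dE b) = 0" using orth'[OF dE_in[OF 2(1)]] 2 F_sub by blast
      ultimately show ?thesis using 2 by (simp add: dU_def)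
    next
      case 3
      then have "c \<noteq> b" using EF_disj by blast
      moreover have "b \<notin> E" using 3 EF_disj by blast
      moreover have "m c (dF b) = 0" using orth[OF _ dF_in[OF 3(1)]] 3 E_sub by blast
      ultimately show ?thesis using 3 by (simp add: dU_def)
    next
      case 4
      then have "b \<notin> E" using EF_disj by blast
      then show ?thesis using F_delta 4 by (simp add: dU_def)
    qed
  qed
  show "w = (\<Sum>b\<in>E \<union> F. m w (dU b) *\<^sub>R b)" for w
  proof -
    obtain wg wa where w: "wg \<in> g" "wa \<in> a" "w = wg + wa" by (rule decomp)
    have "(\<Sum>b\<in>E \<union> F. m w (dU b) *\<^sub>R b) = (\<Sum>b\<in>E. m w (dU b) *\<^sub>R b) + (\<Sum>b\<in>F. m w (dU b) *\<^sub>R b)"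
      by (rule sum.union_disjoint) (use E_fin F_fin EF_disj in auto)
    also have "(\<Sum>b\<in>E. m w (dU b) *\<^sub>R b) = (\<Sum>b\<in>E. m wg (dE b) *\<^sub>R b)"
    proof (intro sum.cong refl)
      fix b assume b: "b \<in> E"
      have "m wa (dE b) = 0" by (rule orth'[OF dE_in[OF b] w(2)])
      then show "m w (dU b) *\<^sub>R b = m wg (dE b) *\<^sub>R b" using b by (simp add: dU_def w(3) m_add_l)
    qed
    also have "\<dots> = wg" using E_exp[OF w(1)] by simp
    also have "(\<Sum>b\<in>F. m w (dU b) *\<^sub>R b) = (\<Sum>b\<in>F. m wa (dF b) *\<^sub>R b)"
    proof (intro sum.cong refl)
      fix b assume b: "b \<in> F"
      have "b \<notin> E" using b EF_disj by blast
      moreover have "m wg (dF b) = 0" by (rule orth[OF w(1) dF_in[OF b]])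
      ultimately show "m w (dU b) *\<^sub>R b = m wa (dF b) *\<^sub>R b" by (simp add: dU_def w(3) m_add_l)
    qed
    also have "\<dots> = wa" using F_exp[OF w(2)] by simp
    finally show ?thesis using w(3) by simp
  qed
qed

definition H :: 'v where
  "H = (SOME w. w \<in> a \<and> (\<forall>X\<in>a. m w X = (\<Sum>e\<in>E. m (br X e) (dE e))))"

lemma H_char: "H \<in> a \<and> (\<forall>X\<in>a. m H X = (\<Sum>e\<in>E. m (br X e) (dE e)))"
proof -
  have "\<exists>w\<in>a. \<forall>X\<in>a. m w X = (\<Sum>e\<in>E. m (br X e) (dE e))"
    by (rule riesz[OF a_sub nd_a]) (simp_all add: br_add_l br_scale_l m_add_l m_scale_l sum.distrib sum_distrib_left)
  then show ?thesis unfolding H_def by (rule someI2_bex) blast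
qed

lemma ricU: "ricci_tensor UNIV br m y z = lam * m y z"
proof -
  have "m (ricci_op UNIV br m y) z = ricci_tensor UNIV br m y z"
    using ricci_char[OF univ_sub nd_univ] by blast
  then show ?thesis using ric by (simp add: m_scale_l)
qed

lemma ricU_frame: "ricci_tensor UNIV br m y z =
   (\<Sum>e\<in>E. m (curvature UNIV br m e y z) (dE e)) + (\<Sum>X\<in>F. m (curvature UNIV br m X y z) (dF X))"
proof -
  have "ricci_tensor UNIV br m y z = (\<Sum>b\<in>E \<union> F. m (curvature UNIV br m b y z) (dU b))"
    by (rule ric_frame[OF univ_sub nd_univ fU])
  also have "\<dots> = (\<Sum>b\<in>E. m (curvature UNIV br m b y z) (dU b)) + (\<Sum>b\<in>F. m (curvature UNIV br m b y z) (dU b))"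
    by (rule sum.union_disjoint) (use E_fin F_fin EF_disj in auto)
  also have "(\<Sum>b\<in>F. m (curvature UNIV br m b y z) (dU b)) = (\<Sum>b\<in>F. m (curvature UNIV br m b y z) (dF b))"
    using EF_disj by (intro sum.cong refl) (auto simp: dU_def)
  also have "(\<Sum>b\<in>E. m (curvature UNIV br m b y z) (dU b)) = (\<Sum>b\<in>E. m (curvature UNIV br m b y z) (dE b))"
    by (intro sum.cong refl) (auto simp: dU_def)
  finally show ?thesis .
qed

lemma ric_aa:
  assumes X: "X \<in> a" and Y: "Y \<in> a"
  shows "lam * m X Y = - (\<Sum>e\<in>E. m (br Y (br X e)) (dE e))"
proof -
  have c1: "curvature UNIV br m e X Y = - br Y (br X e)" if e: "e \<in> g" for e
  proof -
    have "N X Y = 0" by (rule N3a[OF X Y])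
    moreover have "N e Y = - br Y e" by (rule N2[OF e Y])
    moreover have "N X (- br Y e) = 0" by (rule N3[OF X])
    moreover have "br e X = - br X e" by (rule br_anti)
    moreover have "N (- br X e) Y = br Y (br X e)"
      using N2[OF g_id[OF e, of X] Y] by (simp add: nabla_neg1[OF univ_sub nd_univ] br_neg_r)
    ultimately show ?thesis unfolding curvature_def by (simp add: nabla_0_2[OF univ_sub nd_univ])
  qed
  have c2: "curvature UNIV br m Z X Y = 0" if Z: "Z \<in> a" for Z
  proof -
    have "br Z X = 0" by (rule a_ab[OF Z X])
    then show ?thesis unfolding curvature_def
      by (simp add: N3a[OF X Y] N3a[OF Z Y] nabla_0_2[OF univ_sub nd_univ] nabla_0_1[OF univ_sub nd_univ])
  qed
  have "lam * m X Y = ricci_tensor UNIV br m X Y" by (simp add: ricU)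
  also have "\<dots> = (\<Sum>e\<in>E. m (- br Y (br X e)) (dE e))"
    unfolding ricU_frame using c1 c2 E_sub F_sub by (simp add: subset_iff m_zero_l)
  also have "\<dots> = - (\<Sum>e\<in>E. m (br Y (br X e)) (dE e))" by (simp add: m_neg_l sum_negf)
  finally show ?thesis .
qed

lemma alpha_in: "alpha u v \<in> a" using alpha_char by blast
lemma alpha_m: "Y \<in> a \<Longrightarrow> m (alpha u v) Y = m (br Y u) v" using alpha_char by blast

lemma cross:
  assumes v: "v \<in> g" and w: "w \<in> g"
  shows "(\<Sum>e\<in>E. m (br (alpha e w) v) (dE e)) = (\<Sum>X\<in>F. m (br (dF X) (br X v)) w)"
proof -
  have "(\<Sum>e\<in>E. m (br (alpha e w) v) (dE e)) = (\<Sum>e\<in>E. \<Sum>X\<in>F. m (br (dF X) e) w * m (br X v) (dE e))"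
  proof (intro sum.cong refl)
    fix e assume e: "e \<in> E"
    have "alpha e w = (\<Sum>X\<in>F. m (alpha e w) (dF X) *\<^sub>R X)" using F_exp[OF alpha_in] .
    also have "\<dots> = (\<Sum>X\<in>F. m (br (dF X) e) w *\<^sub>R X)"
      using alpha_m dF_in by (intro sum.cong refl) auto
    finally have "br (alpha e w) v = (\<Sum>X\<in>F. m (br (dF X) e) w *\<^sub>R br X v)"
      by (simp add: br_sum_l br_scale_l)
    then show "m (br (alpha e w) v) (dE e) = (\<Sum>X\<in>F. m (br (dF X) e) w * m (br X v) (dE e))"
      by (simp add: m_sum_l m_scale_l)
  qed
  also have "\<dots> = (\<Sum>X\<in>F. \<Sum>e\<in>E. m (br (dF X) e) w * m (br X v) (dE e))" by (rule sum.swap)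
  also have "\<dots> = (\<Sum>X\<in>F. m (br (dF X) (br X v)) w)"
  proof (intro sum.cong refl)
    fix X assume X: "X \<in> F"
    have dX: "dF X \<in> a" using dF_in X by blast
    have Xa: "X \<in> a" using F_sub X by blast
    have "(\<Sum>e\<in>E. m (br (dF X) e) w * m (br X v) (dE e)) = (\<Sum>e\<in>E. m (br X v) (dE e) * m e (br (dF X) w))"
      using sa[OF dX] by (simp add: mult.commute)
    also have "\<dots> = m (\<Sum>e\<in>E. m (br X v) (dE e) *\<^sub>R e) (br (dF X) w)"
      by (simp add: m_sum_l m_scale_l)
    also have "\<dots> = m (br X v) (br (dF X) w)" using E_exp[OF g_id[OF v, of X]] by simp
    also have "\<dots> = m (br (dF X) (br X v)) w" using sa[OF dX, of "br X v" w] m_sym by metis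
    finally show "(\<Sum>e\<in>E. m (br (dF X) e) w * m (br X v) (dE e)) = m (br (dF X) (br X v)) w" .
  qed
  finally show ?thesis .
qed

lemma ric_gg:
  assumes v: "v \<in> g" and w: "w \<in> g"
  shows "ricci_tensor UNIV br m v w = ricci_tensor g br m v w - m (br H v) w"
proof -
  note n1 = nabla_add1[OF univ_sub nd_univ] and n2 = nabla_add2[OF univ_sub nd_univ]
  have ngvw: "Ng v w \<in> g" and ngew: "\<And>e. Ng e w \<in> g" using nabla_in[OF g_sub nd_g] by blast+
  have mF: "m (curvature UNIV br m X v w) (dF X) = - m (br (dF X) (br X v)) w" if X: "X \<in> F" for X
  proof -
    have Xa: "X \<in> a" using X F_sub by blast
    have dX: "dF X \<in> a" using X dF_in by blast
    have bXv: "br X v \<in> g" using g_id[OF v] .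
    have "curvature UNIV br m X v w = - Ng (br X v) w - alpha (br X v) w"
      unfolding curvature_def using N3[OF Xa, of "N v w"] N3[OF Xa, of w] N1[OF bXv w]
      by (simp add: nabla_0_2[OF univ_sub nd_univ])
    moreover have "m (Ng (br X v) w) (dF X) = 0" by (rule orth[OF nabla_in[OF g_sub nd_g] dX])
    moreover have "m (alpha (br X v) w) (dF X) = m (br (dF X) (br X v)) w" by (rule alpha_m[OF dX])
    ultimately show ?thesis by (simp add: m_diff_l m_neg_l)
  qed
  have mE: "m (curvature UNIV br m e v w) (dE e) =
      m (curvature g br m e v w) (dE e) - m (br (alpha v w) e) (dE e) + m (br (alpha e w) v) (dE e)"
    if e: "e \<in> E" for e
  proof -
    have eg: "e \<in> g" using e E_sub by blast
    have d: "dE e \<in> g" using dE_in e by blast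
    have bev: "br e v \<in> g" using g_id[OF v] .
    have A: "N e (N v w) = Ng e (Ng v w) + alpha e (Ng v w) - br (alpha v w) e"
      using N1[OF v w] N1[OF eg ngvw] N2[OF eg alpha_in] n2 by simp
    have B: "N v (N e w) = Ng v (Ng e w) + alpha v (Ng e w) - br (alpha e w) v"
      using N1[OF eg w] N1[OF v ngew] N2[OF v alpha_in] n2 by simp
    have C: "N (br e v) w = Ng (br e v) w + alpha (br e v) w" using N1[OF bev w] .
    have o: "\<And>x y. m (alpha x y) (dE e) = 0" using orth'[OF d alpha_in] .
    show ?thesis unfolding curvature_def A B C
      by (simp add: m_add_l m_diff_l o algebra_simps)
  qed
  have S1: "(\<Sum>e\<in>E. m (br (alpha v w) e) (dE e)) = m (br H v) w"
    using H_char alpha_in alpha_m m_sym by metis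
  have "ricci_tensor UNIV br m v w =
     (\<Sum>e\<in>E. m (curvature g br m e v w) (dE e) - m (br (alpha v w) e) (dE e) + m (br (alpha e w) v) (dE e))
     + (\<Sum>X\<in>F. - m (br (dF X) (br X v)) w)"
    unfolding ricU_frame using mE mF by simp
  also have "\<dots> = ricci_tensor g br m v w - m (br H v) w"
    using S1 cross[OF v w] ric_frame[OF g_sub nd_g fE, of v w]
    by (simp add: sum.distrib sum_subtractf sum_negf)
  finally show ?thesis .
qed

end



context setting2 begin

definition restr :: "'v \<Rightarrow> 'v \<Rightarrow> 'v" where
  "restr X = (\<lambda>v. if v \<in> g then br X v else 0)"

lemma restr_g: "v \<in> g \<Longrightarrow> restr X v = br X v" by (simp add: restr_def)

lemma restr_lin2: "X \<in> a \<Longrightarrow> Y \<in> a \<Longrightarrow> linear_on g (\<lambda>v. restr X (restr Y v))"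
  unfolding linear_on_def using g_sub g_id
  by (simp add: restr_def subspace_add subspace_scale br_add_r br_scale_r)

lemma tr_restr:
  assumes X: "X \<in> a" and Y: "Y \<in> a"
  shows "trace_form g (restr X) (restr Y) = - lam * m Y X"
proof -
  have "trace_form g (restr X) (restr Y) = (\<Sum>e\<in>E. m (restr X (restr Y e)) (dE e))"
    unfolding trace_form_def by (rule trace_frame[OF g_sub nd_g fE restr_lin2[OF X Y]])
  also have "\<dots> = (\<Sum>e\<in>E. m (br X (br Y e)) (dE e))"
    using E_sub g_id by (intro sum.cong refl) (auto simp: restr_def)
  also have "\<dots> = - lam * m Y X" using ric_aa[OF Y X] by simp
  finally show ?thesis .
qed

lemma restr_inj: "inj_on restr a"
proof (rule inj_onI)
  fix X Y assume X: "X \<in> a" and Y: "Y \<in> a" and eq: "restr X = restr Y"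
  define W where "W = X - Y"
  have W: "W \<in> a" unfolding W_def using X Y a_sub by (simp add: subspace_diff)
  have bW: "br W e = 0" if "e \<in> g" for e
  proof -
    have "restr X e = restr Y e" using eq by simp
    then show ?thesis using that by (simp add: restr_def W_def br_diff_l)
  qed
  have "\<forall>Z\<in>a. m W Z = 0"
  proof
    fix Z assume Z: "Z \<in> a"
    have "lam * m Z W = - (\<Sum>e\<in>E. m (br W (br Z e)) (dE e))" by (rule ric_aa[OF Z W])
    also have "\<dots> = 0"
    proof -
      have "\<forall>e\<in>E. m (br W (br Z e)) (dE e) = 0" using bW g_id E_sub by (auto simp: m_zero_l)
      then show ?thesis by simp
    qed
    finally show "m W Z = 0" using lam m_sym by simp
  qed
  then have "W = 0" using nd_a W unfolding nondeg_def by blast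
  then show "X = Y" unfolding W_def by simp
qed

lemma restr_add: "restr (X + Y) = (\<lambda>u. restr X u + restr Y u)"
  by (rule ext) (simp add: restr_def br_add_l)
lemma restr_scale: "restr (c *\<^sub>R X) = (\<lambda>u. c *\<^sub>R restr X u)"
  by (rule ext) (simp add: restr_def br_scale_l)
lemma restr_zero: "restr 0 = (\<lambda>_. 0)"
  by (rule ext) (simp add: restr_def br_zero_l)
lemma restr_comm: "X \<in> a \<Longrightarrow> Y \<in> a \<Longrightarrow> (\<lambda>v. restr X (restr Y v) - restr Y (restr X v)) = restr 0"
proof (rule ext)
  fix v assume X: "X \<in> a" and Y: "Y \<in> a"
  show "restr X (restr Y v) - restr Y (restr X v) = restr 0 v"
  proof (cases "v \<in> g")
    case True
    then have "br X (br Y v) - br Y (br X v) = 0"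
      using br_der[of X Y v] a_ab[OF X Y] by (simp add: br_zero_l)
    then show ?thesis using True g_id by (simp add: restr_def br_zero_l)
  next
    case False
    then show ?thesis using g_sub subspace_0 by (simp add: restr_def br_zero_r)
  qed
qed

lemma restr_der: "X \<in> a \<Longrightarrow> restr X \<in> derivations g br"
proof -
  assume X: "X \<in> a"
  have lin: "linear_on g (restr X)"
    unfolding linear_on_def using g_sub g_id
    by (simp add: restr_def subspace_add subspace_scale br_add_r br_scale_r)
  have out: "\<forall>x. x \<notin> g \<longrightarrow> restr X x = 0" by (simp add: restr_def)
  have lb: "\<forall>x\<in>g. \<forall>y\<in>g. restr X (br x y) = br (restr X x) y + br x (restr X y)"
  proof (intro ballI)
    fix x y assume x: "x \<in> g" and y: "y \<in> g"
    have "br x y \<in> g" using g_id[OF y] .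
    then show "restr X (br x y) = br (restr X x) y + br x (restr X y)"
      using x y br_der[of X x y] by (simp add: restr_g)
  qed
  show ?thesis unfolding derivations_def using lin out lb by blast
qed

lemma ricci_g: "x \<in> g \<Longrightarrow> ricci_op g br m x = lam *\<^sub>R x + restr H x"
proof -
  assume x: "x \<in> g"
  have Ha: "H \<in> a" using H_char by blast
  show ?thesis
  proof (rule ricci_eqI[OF g_sub nd_g])
    show "lam *\<^sub>R x + restr H x \<in> g"
      using x g_id g_sub by (simp add: restr_def subspace_add subspace_scale)
    fix z assume z: "z \<in> g"
    have "ricci_tensor g br m x z = ricci_tensor UNIV br m x z + m (br H x) z"
      using ric_gg[OF x z] by simp
    then show "m (lam *\<^sub>R x + restr H x) z = ricci_tensor g br m x z"
      using x by (simp add: ricU restr_def m_add_l m_scale_l)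
  qed
qed

definition Phi :: "'v \<times> ('v \<Rightarrow> 'v) \<Rightarrow> 'v" where
  "Phi p = fst p + inv_into a restr (snd p)"

lemma inv_restr: "X \<in> a \<Longrightarrow> inv_into a restr (restr X) = X"
  using inv_into_f_f[OF restr_inj] by blast

lemma Phi_restr: "X \<in> a \<Longrightarrow> Phi (v, restr X) = v + X"
  by (simp add: Phi_def inv_restr)

lemma main:
  "\<exists>D. D \<in> derivations g br \<and> (\<forall>x\<in>g. ricci_op g br m x = lam *\<^sub>R x + D x) \<and>
           (\<exists>A. der_subalgebra g br A \<and> D \<in> A \<and> (\<forall>X\<in>A. self_adjoint_on g m X) \<and>
                (\<forall>X\<in>A. (\<forall>Y\<in>A. trace_form g X Y = 0) \<longrightarrow> X = (\<lambda>_. 0)) \<and>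
                (\<exists>\<Phi>. sd_isometric_iso UNIV br m g A lam \<Phi>))"
proof (intro exI conjI)
  have Ha: "H \<in> a" using H_char by blast
  have z0: "(0::'v) \<in> a" using a_sub subspace_0 by blast
  show "restr H \<in> derivations g br" by (rule restr_der[OF Ha])
  show "\<forall>x\<in>g. ricci_op g br m x = lam *\<^sub>R x + restr H x" using ricci_g by blast
  show "der_subalgebra g br (restr ` a)"
    unfolding der_subalgebra_def
  proof (intro conjI ballI allI)
    show "restr ` a \<subseteq> derivations g br" using restr_der by blast
    show "(\<lambda>_. 0) \<in> restr ` a" using z0 restr_zero by (metis image_eqI)
    fix Xr assume "Xr \<in> restr ` a"
    then obtain X where X: "X \<in> a" "Xr = restr X" by blast
    fix c :: real
    show "(\<lambda>v. c *\<^sub>R Xr v) \<in> restr ` a"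
      using X a_sub restr_scale[of c X] subspace_scale by (metis image_eqI)
  next
    fix Xr Yr assume "Xr \<in> restr ` a" "Yr \<in> restr ` a"
    then obtain X Y where X: "X \<in> a" "Xr = restr X" and Y: "Y \<in> a" "Yr = restr Y" by blast
    show "(\<lambda>v. Xr v + Yr v) \<in> restr ` a"
      using X Y a_sub restr_add[of X Y] subspace_add by (metis image_eqI)
    show "(\<lambda>v. Xr (Yr v) - Yr (Xr v)) \<in> restr ` a"
      using X Y restr_comm[OF X(1) Y(1)] z0 by (metis image_eqI)
  qed
  show "restr H \<in> restr ` a" using Ha by blast
  show "\<forall>X\<in>restr ` a. self_adjoint_on g m X"
    unfolding self_adjoint_on_def using sa by (auto simp: restr_def)
  show "\<forall>X\<in>restr ` a. (\<forall>Y\<in>restr ` a. trace_form g X Y = 0) \<longrightarrow> X = (\<lambda>_. 0)"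
  proof (intro ballI impI)
    fix Xr assume "Xr \<in> restr ` a"
    then obtain X where X: "X \<in> a" "Xr = restr X" by blast
    assume h: "\<forall>Y\<in>restr ` a. trace_form g Xr Y = 0"
    have "\<forall>Y\<in>a. m X Y = 0"
    proof
      fix Y assume Y: "Y \<in> a"
      have "trace_form g Xr (restr Y) = 0" using h Y by blast
      then have "- lam * m Y X = 0" using tr_restr[OF X(1) Y] X(2) by simp
      then show "m X Y = 0" using lam m_sym by simp
    qed
    then have "X = 0" using nd_a X(1) unfolding nondeg_def by blast
    then show "Xr = (\<lambda>_. 0)" using X(2) restr_zero by simp
  qed
  show "sd_isometric_iso UNIV br m g (restr ` a) lam Phi"
    unfolding sd_isometric_iso_def
  proof (intro conjI ballI allI)
    show "bij_betw Phi (g \<times> restr ` a) UNIV"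
      unfolding bij_betw_def
    proof
      show "inj_on Phi (g \<times> restr ` a)"
      proof (rule inj_onI)
        fix p q assume p: "p \<in> g \<times> restr ` a" and q: "q \<in> g \<times> restr ` a" and e: "Phi p = Phi q"
        obtain v X where pv: "p = (v, restr X)" "v \<in> g" "X \<in> a" using p by blast
        obtain w Y where qw: "q = (w, restr Y)" "w \<in> g" "Y \<in> a" using q by blast
        have "v + X = w + Y" using e pv qw Phi_restr by simp
        then have "v - w = Y - X" by (simp add: algebra_simps)
        moreover have "v - w \<in> g" using pv qw g_sub subspace_diff by blast
        moreover have "Y - X \<in> a" using pv qw a_sub subspace_diff by blast
        ultimately have "Y - X \<in> g" "Y - X \<in> a" by simp_all
        then have "Y - X = 0" using ga0 by blast
        then have "Y = X" "v = w" using \<open>v - w = Y - X\<close> by simp_all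
        then show "p = q" using pv qw by simp
      qed
      show "Phi ` (g \<times> restr ` a) = UNIV"
      proof (intro set_eqI iffI)
        fix u :: 'v
        obtain ug ua where u: "ug \<in> g" "ua \<in> a" "u = ug + ua" by (rule decomp)
        then have "Phi (ug, restr ua) = u" using Phi_restr by simp
        moreover have "(ug, restr ua) \<in> g \<times> restr ` a" using u by blast
        ultimately show "u \<in> Phi ` (g \<times> restr ` a)" by (metis image_eqI)
      qed simp
    qed
    fix v w Xr Yr c
    assume v: "v \<in> g" and w: "w \<in> g" and "Xr \<in> restr ` a" "Yr \<in> restr ` a"
    then obtain X Y where X: "X \<in> a" "Xr = restr X" and Y: "Y \<in> a" "Yr = restr Y" by blast
    have XY: "X + Y \<in> a" using X Y a_sub subspace_add by blast
    have cX: "c *\<^sub>R X \<in> a" using X a_sub subspace_scale by blast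
    show "Phi (v + w, \<lambda>u. Xr u + Yr u) = Phi (v, Xr) + Phi (w, Yr)"
      using Phi_restr[OF XY] Phi_restr[OF X(1)] Phi_restr[OF Y(1)] X(2) Y(2) restr_add[of X Y]
      by (simp add: algebra_simps)
    show "Phi (c *\<^sub>R v, \<lambda>u. c *\<^sub>R Xr u) = c *\<^sub>R Phi (v, Xr)"
      using Phi_restr[OF cX] Phi_restr[OF X(1)] X(2) restr_scale[of c X]
      by (simp add: algebra_simps)
    have sb: "sd_bracket br (v, Xr) (w, Yr) = (br v w + br X w - br Y v, restr 0)"
      unfolding sd_bracket_def using restr_comm[OF X(1) Y(1)] X(2) Y(2) v w
      by (simp add: restr_def)
    show "Phi (sd_bracket br (v, Xr) (w, Yr)) = br (Phi (v, Xr)) (Phi (w, Yr))"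
      unfolding sb Phi_restr[OF z0] unfolding X(2) Y(2) Phi_restr[OF X(1)] Phi_restr[OF Y(1)]
      using a_ab[OF X(1) Y(1)] br_anti[of v Y]
      by (simp add: br_add_l br_add_r algebra_simps)
    show "m (Phi (v, Xr)) (Phi (w, Yr)) = sd_metric g m lam (v, Xr) (w, Yr)"
      unfolding sd_metric_def X(2) Y(2) Phi_restr[OF X(1)] Phi_restr[OF Y(1)]
      using tr_restr[OF X(1) Y(1)] orth[OF v Y(1)] orth'[OF w X(1)] lam m_sym[of Y X]
      by (simp add: m_add_l m_add_r)
  qed
qed

end

theorem corollary4p6:
  fixes br :: "'v::euclidean_space \<Rightarrow> 'v \<Rightarrow> 'v"
    and m :: "'v \<Rightarrow> 'v \<Rightarrow> real"
    and lam :: real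
    and g a :: "'v set"
  assumes "lie_algebra UNIV br"
    and "solvable UNIV br"
    and "metric_on UNIV m"
    and "\<forall>x. ricci_op UNIV br m x = lam *\<^sub>R x"
    and "lam \<noteq> 0"
    and "pseudo_iwasawa UNIV br m g a"
  shows "\<exists>D. D \<in> derivations g br \<and> (\<forall>x\<in>g. ricci_op g br m x = lam *\<^sub>R x + D x) \<and>
           (\<exists>A. der_subalgebra g br A \<and> D \<in> A \<and> (\<forall>X\<in>A. self_adjoint_on g m X) \<and>
                (\<forall>X\<in>A. (\<forall>Y\<in>A. trace_form g X Y = 0) \<longrightarrow> X = (\<lambda>_. 0)) \<and>
                (\<exists>\<Phi>. sd_isometric_iso UNIV br m g A lam \<Phi>))"
proof -
  have S: "setting br m lam g a"
    unfolding setting_def using assms(1,3,4,5,6) by blast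
  interpret S: setting br m lam g a by (rule S)
  obtain E dE where fE: "S.frame g E dE" using S.frame_exists[OF S.g_sub S.nd_g] by blast
  obtain F dF where fF: "S.frame a F dF" using S.frame_exists[OF S.a_sub S.nd_a] by blast
  interpret S2: setting2 br m lam g a E F dE dF
    unfolding setting2_def setting2_axioms_def using S fE fF by blast
  show ?thesis by (rule S2.main)
qed

end
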